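(* Let $N$ be a positive integer power of two and $j=\sqrt{-1}$. Let $\mathbf{\Phi}$ be the $N\times N$ discrete Fresnel transform matrix with entries (indices $m,n=0,\dots,N-1$) $$[\mathbf{\Phi}]_{m,n}=\frac{1}{\sqrt{N}}\,e^{-j\frac{\pi}{4}}\,e^{j\frac{\pi}{N}(n-m)^2},$$ let $\mathbf{\Delta}=\mathrm{diag}\left(e^{j\frac{2\pi}{N}\cdot 0},e^{j\frac{2\pi}{N}\cdot 1},\dots,e^{j\frac{2\pi}{N}(N-1)}\right)$, and let $\mathbf{\Pi}$ be the $N\times N$ cyclic permutation matrix with $[\mathbf{\Pi}]_{m,n}=1$ if $m\equiv n+1\pmod N$ and $0$ otherwise. Then for every integer $k$, $$\mathbf{\Phi}\mathbf{\Delta}^k\mathbf{\Phi}^H=e^{j\frac{\pi}{N}k^2}\,\mathbf{\Pi}^k\mathbf{\Delta}^k .$$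
   Context: $\mathbf{\Phi}^H$ denotes the conjugate transpose of $\mathbf{\Phi}$; $\mathbf{\Phi}$ is unitary ($\mathbf{\Phi}^H\mathbf{\Phi}=\mathbf{I}_N$). Negative powers denote powers of the inverse matrix. Equivalently, $\mathbf{\Phi}=\mathbf{\Theta}_2\mathbf{F}\mathbf{\Theta}_1$ where $\mathbf{F}$ is the unitary DFT matrix $[\mathbf{F}]_{m,n}=\frac{1}{\sqrt N}e^{-j2\pi mn/N}$, $\mathbf{\Theta}_1=\mathrm{diag}(e^{-j\pi/4}e^{j\pi m^2/N})_m$, $\mathbf{\Theta}_2=\mathrm{diag}(e^{j\pi m^2/N})_m$. *)

theory Defs
  imports Complex_Main "Jordan_Normal_Form.Schur_Decomposition"
begin

text \<open>Inverse of a square matrix (only meaningful for invertible matrices).\<close>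
definition mat_inv :: "complex mat \<Rightarrow> complex mat" where
  "mat_inv A = (SOME B. B \<in> carrier_mat (dim_row A) (dim_row A) \<and> inverts_mat A B \<and> inverts_mat B A)"

definition mat_int_pow :: "complex mat \<Rightarrow> int \<Rightarrow> complex mat" where
  "mat_int_pow A k = (if 0 \<le> k then A ^\<^sub>m nat k else (mat_inv A) ^\<^sub>m nat (- k))"

definition fresnel_mat :: "nat \<Rightarrow> complex mat" where
  "fresnel_mat N = mat N N (\<lambda>(m, n).
     (1 / csqrt (of_nat N)) * exp (- \<i> * of_real (pi / 4))
       * exp (\<i> * of_real (pi / real N) * of_int ((int n - int m)\<^sup>2)))"

definition delta_mat :: "nat \<Rightarrow> complex mat" where
  "delta_mat N = mat N N (\<lambda>(m, n).
     if m = n then exp (\<i> * of_real (2 * pi / real N) * of_nat m) else 0)"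

definition cyc_perm_mat :: "nat \<Rightarrow> complex mat" where
  "cyc_perm_mat N = mat N N (\<lambda>(m, n). if m mod N = (n + 1) mod N then 1 else 0)"

end

theory Submission
  imports Defs
begin

definition Ef :: "nat \<Rightarrow> int \<Rightarrow> complex" where
  "Ef N x = exp (\<i> * of_real (pi / real N) * of_int x)"

lemma Ef_add: "Ef N (a + b) = Ef N a * Ef N b"
  unfolding Ef_def by (simp add: distrib_left exp_add[symmetric])

lemma Ef_0[simp]: "Ef N 0 = 1"
  unfolding Ef_def by simp

lemma Ef_cis: "Ef N x = cis (pi / real N * of_int x)"
  unfolding Ef_def cis_conv_exp by (simp add: mult.assoc)

lemma Ef_per: assumes "N > 0" shows "Ef N (2 * int N * t) = 1"
proof -
  have "pi / real N * of_int (2 * int N * t) = 2 * pi * of_int t"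
    using assms by (simp add: field_simps)
  thus ?thesis unfolding Ef_cis by simp
qed

lemma Ef_cong: assumes "N > 0" "x = y + 2 * int N * t" shows "Ef N x = Ef N y"
  using assms by (simp add: Ef_add Ef_per)

lemma Ef_eq1: assumes "N > 0" "Ef N (2 * r) = 1" shows "int N dvd r"
proof -
  from assms(2) have "cos (pi / real N * of_int (2 * r)) = 1" unfolding Ef_cis
    by (metis complex.sel(1) cis.sel(1) one_complex.sel(1))
  then obtain n :: int where n: "pi / real N * of_int (2 * r) = of_int n * 2 * pi"
    by (auto simp: cos_one_2pi_int)
  hence "real_of_int r = real N * n" using assms(1) pi_gt_zero by (simp add: field_simps)
  hence "r = int N * n" by (metis of_int_eq_iff of_int_mult of_int_of_nat_eq)
  thus ?thesis by simp
qed

lemma Ef_pow: "Ef N x ^ l = Ef N (x * int l)"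
  by (induction l) (auto simp: Ef_add distrib_left mult.commute)

lemma Ef_geo: assumes "N > 0"
  shows "(\<Sum>l<N. Ef N (2 * r * int l)) = (if int N dvd r then of_nat N else 0)"
proof -
  have "(\<Sum>l<N. Ef N (2 * r * int l)) = (\<Sum>l<N. Ef N (2 * r) ^ l)"
    by (simp add: Ef_pow)
  also have "\<dots> = (if Ef N (2 * r) = 1 then of_nat N else (1 - Ef N (2 * r) ^ N) / (1 - Ef N (2 * r)))"
    by (rule sum_gp_strict)
  also have "\<dots> = (if int N dvd r then of_nat N else 0)"
  proof (cases "int N dvd r")
    case True
    then obtain t where "r = int N * t" by auto
    hence "Ef N (2 * r) = 1" using Ef_per[OF assms, of t] by (simp add: mult.assoc)
    then show ?thesis using True by simp
  next
    case False
    hence "Ef N (2 * r) \<noteq> 1" using Ef_eq1[OF assms] by blast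
    moreover have "Ef N (2 * r) ^ N = 1"
      using Ef_per[OF assms, of r] by (simp add: Ef_pow mult.commute mult.left_commute)
    ultimately show ?thesis using False by simp
  qed
  finally show ?thesis .
qed


definition Dk :: "nat \<Rightarrow> int \<Rightarrow> complex mat" where
  "Dk N k = mat N N (\<lambda>(m, n). if m = n then Ef N (2 * k * int m) else 0)"

definition Pk :: "nat \<Rightarrow> int \<Rightarrow> complex mat" where
  "Pk N k = mat N N (\<lambda>(m, n). if int m mod int N = (int n + k) mod int N then 1 else 0)"

lemma Dk_car[simp]: "Dk N k \<in> carrier_mat N N" unfolding Dk_def by simp
lemma Pk_car[simp]: "Pk N k \<in> carrier_mat N N" unfolding Pk_def by simp

lemma Dk_0: "Dk N 0 = 1\<^sub>m N"
  by (rule eq_matI) (auto simp: Dk_def)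

lemma Pk_0: "Pk N 0 = 1\<^sub>m N"
  by (rule eq_matI) (auto simp: Pk_def)

lemma Dk_mult: "Dk N a * Dk N b = Dk N (a + b)"
proof (rule eq_matI)
  fix i j assume ij: "i < dim_row (Dk N (a + b))" "j < dim_col (Dk N (a + b))"
  hence "i < N" "j < N" unfolding Dk_def by auto
  have "(Dk N a * Dk N b) $$ (i, j) = (\<Sum>l\<in>{0..<N}. Dk N a $$ (i, l) * Dk N b $$ (l, j))"
    using \<open>i < N\<close> \<open>j < N\<close> by (simp add: scalar_prod_def Dk_def)
  also have "\<dots> = (\<Sum>l\<in>{0..<N}. if l = i then (if i = j then Ef N (2 * a * int i) * Ef N (2 * b * int i) else 0) else 0)"
    by (rule sum.cong) (use \<open>i < N\<close> \<open>j < N\<close> in \<open>auto simp: Dk_def\<close>)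
  also have "\<dots> = Dk N (a + b) $$ (i, j)"
    using \<open>i < N\<close> \<open>j < N\<close> by (simp add: Dk_def Ef_add[symmetric] algebra_simps)
  finally show "(Dk N a * Dk N b) $$ (i, j) = Dk N (a + b) $$ (i, j)" .
qed (auto simp: Dk_def)

lemma Pk_mult: assumes "N > 0" shows "Pk N a * Pk N b = Pk N (a + b)"
proof (rule eq_matI)
  fix i j assume ij: "i < dim_row (Pk N (a + b))" "j < dim_col (Pk N (a + b))"
  hence "i < N" "j < N" unfolding Pk_def by auto
  define l0 where "l0 = nat ((int j + b) mod int N)"
  have m: "0 \<le> (int j + b) mod int N" "(int j + b) mod int N < int N" using assms by simp_all
  have l0: "l0 < N" "int l0 = (int j + b) mod int N" using m unfolding l0_def by auto
  have key: "\<And>l. l < N \<Longrightarrow> (int l mod int N = (int j + b) mod int N) = (l = l0)"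
    using l0 by auto
  have "(Pk N a * Pk N b) $$ (i, j) = (\<Sum>l\<in>{0..<N}. Pk N a $$ (i, l) * Pk N b $$ (l, j))"
    using \<open>i < N\<close> \<open>j < N\<close> by (simp add: scalar_prod_def Pk_def)
  also have "\<dots> = (\<Sum>l\<in>{0..<N}. if l = l0 then Pk N a $$ (i, l0) else 0)"
    by (rule sum.cong) (use \<open>j < N\<close> key in \<open>auto simp: Pk_def\<close>)
  also have "\<dots> = Pk N a $$ (i, l0)" using l0 by simp
  also have "\<dots> = Pk N (a + b) $$ (i, j)"
  proof -
    have "(int l0 + a) mod int N = (int j + (a + b)) mod int N"
      using l0(2) by (metis add.commute add.left_commute mod_add_left_eq)
    thus ?thesis using \<open>i < N\<close> \<open>j < N\<close> l0 by (simp add: Pk_def)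
  qed
  finally show "(Pk N a * Pk N b) $$ (i, j) = Pk N (a + b) $$ (i, j)" .
qed (auto simp: Pk_def)

lemma int_pow_hom:
  fixes X :: "int \<Rightarrow> complex mat"
  assumes car: "\<And>a. X a \<in> carrier_mat N N" and one: "X 0 = 1\<^sub>m N"
    and mul: "\<And>a b. X a * X b = X (a + b)"
  shows "mat_int_pow (X 1) k = X k"
proof -
  have pw: "X c ^\<^sub>m n = X (c * int n)" for c n
  proof (induction n)
    case 0
    then show ?case using car[of c] one by simp
  next
    case (Suc n)
    then show ?case by (simp add: mul algebra_simps)
  qed
  have inv: "mat_inv (X 1) = X (-1)"
  proof -
    let ?P = "\<lambda>B. B \<in> carrier_mat (dim_row (X 1)) (dim_row (X 1)) \<and> inverts_mat (X 1) B \<and> inverts_mat B (X 1)"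
    have dr: "dim_row (X c) = N" for c using car[of c] by simp
    have "?P (X (-1))" using car dr by (simp add: inverts_mat_def mul one)
    hence "?P (mat_inv (X 1))" unfolding mat_inv_def by (rule someI)
    hence B: "mat_inv (X 1) \<in> carrier_mat N N" "mat_inv (X 1) * X 1 = 1\<^sub>m N"
      using dr by (auto simp: inverts_mat_def)
    have "mat_inv (X 1) = mat_inv (X 1) * (X 1 * X (-1))" using B by (simp add: mul one)
    also have "\<dots> = (mat_inv (X 1) * X 1) * X (-1)"
      by (rule assoc_mult_mat[symmetric]) (use B car in auto)
    also have "\<dots> = X (-1)" using B(2) left_mult_one_mat[OF car[of "-1"]] by simp
    finally show ?thesis .
  qed
  show ?thesis
    by (cases "0 \<le> k") (auto simp: mat_int_pow_def pw inv)
qed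


lemma delta_Dk: "delta_mat N = Dk N 1"
  by (rule eq_matI) (auto simp: delta_mat_def Dk_def Ef_def mult_ac)

lemma cyc_Pk: "cyc_perm_mat N = Pk N 1"
proof (rule eq_matI)
  fix i j assume "i < dim_row (Pk N 1)" "j < dim_col (Pk N 1)"
  hence "i < N" "j < N" by (auto simp: Pk_def)
  have "(i mod N = (j + 1) mod N) = (int i mod int N = (int j + 1) mod int N)"
    by (metis of_nat_1 of_nat_add of_nat_eq_iff zmod_int)
  thus "cyc_perm_mat N $$ (i, j) = Pk N 1 $$ (i, j)"
    using \<open>i < N\<close> \<open>j < N\<close> by (simp add: cyc_perm_mat_def Pk_def)
qed (auto simp: cyc_perm_mat_def Pk_def)

lemma adj_index:
  assumes "A \<in> carrier_mat n n" "i < n" "j < n"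
  shows "mat_adjoint A $$ (i, j) = cnj (A $$ (j, i))"
  using assms by (simp add: mat_adjoint_def mat_of_rows_def)

lemma adj_car: "A \<in> carrier_mat n n \<Longrightarrow> mat_adjoint A \<in> carrier_mat n n"
  by (simp add: mat_adjoint_def mat_of_rows_def)


lemma Ef_cnj: "cnj (Ef N x) = Ef N (- x)"
  unfolding Ef_cis cis_cnj by simp

lemma c_cnj: "((1 / csqrt (of_nat N)) * exp (- \<i> * of_real (pi / 4))) *
   cnj ((1 / csqrt (of_nat N)) * exp (- \<i> * of_real (pi / 4))) = 1 / of_nat N"
proof -
  have s: "csqrt (of_nat N) = of_real (sqrt (real N))"
    by (metis csqrt_of_real of_nat_0_le_iff of_real_of_nat_eq)
  have e: "exp (- \<i> * of_real (pi / 4)) = cis (- (pi / 4))"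
    by (simp add: cis_conv_exp)
  have q: "complex_of_real (sqrt (real N)) * complex_of_real (sqrt (real N)) = of_nat N"
  proof -
    have "sqrt (real N) * sqrt (real N) = real N" by simp
    hence "complex_of_real (sqrt (real N) * sqrt (real N)) = complex_of_real (real N)" by simp
    thus ?thesis by (simp only: of_real_mult of_real_of_nat_eq)
  qed
  have cm: "cis (- (pi / 4)) * cis (- (- (pi / 4))) = 1" by (simp add: cis_mult)
  have "((1 / csqrt (of_nat N)) * exp (- \<i> * of_real (pi / 4))) *
   cnj ((1 / csqrt (of_nat N)) * exp (- \<i> * of_real (pi / 4)))
    = (1 / complex_of_real (sqrt (real N)) * cis (- (pi / 4))) * (1 / complex_of_real (sqrt (real N)) * cis (- (- (pi / 4))))"
    unfolding s e by (simp only: complex_cnj_mult complex_cnj_divide complex_cnj_one complex_cnj_complex_of_real cis_cnj)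
  also have "\<dots> = 1 / (complex_of_real (sqrt (real N)) * complex_of_real (sqrt (real N))) * (cis (- (pi / 4)) * cis (- (- (pi / 4))))"
    by (simp only: mult_ac divide_inverse inverse_mult_distrib mult_1_left)
  also have "\<dots> = 1 / of_nat N" unfolding q cm by simp
  finally show ?thesis .
qed

theorem lemma2:
  fixes N p :: nat and k :: int
  assumes "p \<ge> 1" and "N = 2 ^ p"
  shows "fresnel_mat N * mat_int_pow (delta_mat N) k * mat_adjoint (fresnel_mat N)
       = exp (\<i> * of_real (pi / real N) * of_int (k\<^sup>2))
           \<cdot>\<^sub>m (mat_int_pow (cyc_perm_mat N) k * mat_int_pow (delta_mat N) k)"
proof -
  have N0: "N > 0" using assms by simp
  have "even N" using assms by simp
  then obtain h where h: "N = 2 * h" by blast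
  have D: "mat_int_pow (delta_mat N) k = Dk N k" unfolding delta_Dk
    by (rule int_pow_hom) (auto simp: Dk_0 Dk_mult)
  have P: "mat_int_pow (cyc_perm_mat N) k = Pk N k" unfolding cyc_Pk
    by (rule int_pow_hom) (auto simp: Pk_0 Pk_mult[OF N0])
  define c where "c = (1 / csqrt (of_nat N)) * exp (- \<i> * of_real (pi / 4))"
  have cc: "c * cnj c = 1 / of_nat N" unfolding c_def by (rule c_cnj)
  have F: "fresnel_mat N = mat N N (\<lambda>(m,n). c * Ef N ((int n - int m)\<^sup>2))"
    unfolding fresnel_mat_def c_def Ef_def by simp
  have Fcar: "fresnel_mat N \<in> carrier_mat N N" unfolding F by simp
  have Fi: "\<And>a b. a < N \<Longrightarrow> b < N \<Longrightarrow> fresnel_mat N $$ (a, b) = c * Ef N ((int b - int a)\<^sup>2)"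
    unfolding F by simp
  have E: "exp (\<i> * of_real (pi / real N) * of_int (k\<^sup>2)) = Ef N (k\<^sup>2)" unfolding Ef_def ..
  show ?thesis unfolding D P E
  proof (rule eq_matI)
    fix m n assume "m < dim_row (Ef N (k\<^sup>2) \<cdot>\<^sub>m (Pk N k * Dk N k))"
      "n < dim_col (Ef N (k\<^sup>2) \<cdot>\<^sub>m (Pk N k * Dk N k))"
    hence m: "m < N" and n: "n < N" by (auto simp: Pk_def Dk_def)
    have L1: "(fresnel_mat N * Dk N k) $$ (m, l) = c * Ef N ((int l - int m)\<^sup>2) * Ef N (2 * k * int l)"
      if l: "l < N" for l
    proof -
      have "(fresnel_mat N * Dk N k) $$ (m, l) = (\<Sum>i\<in>{0..<N}. fresnel_mat N $$ (m, i) * Dk N k $$ (i, l))"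
        using m l by (simp add: scalar_prod_def Dk_def F)
      also have "\<dots> = (\<Sum>i\<in>{0..<N}. if i = l then c * Ef N ((int l - int m)\<^sup>2) * Ef N (2 * k * int l) else 0)"
        by (rule sum.cong) (use m l in \<open>auto simp: Dk_def F\<close>)
      also have "\<dots> = c * Ef N ((int l - int m)\<^sup>2) * Ef N (2 * k * int l)" using l by simp
      finally show ?thesis .
    qed
    have "(fresnel_mat N * Dk N k * mat_adjoint (fresnel_mat N)) $$ (m, n)
        = (\<Sum>l\<in>{0..<N}. (fresnel_mat N * Dk N k) $$ (m, l) * mat_adjoint (fresnel_mat N) $$ (l, n))"
      using m n adj_car[OF Fcar] by (simp add: scalar_prod_def Dk_def F)
    also have "\<dots> = (\<Sum>l\<in>{0..<N}. c * Ef N ((int l - int m)\<^sup>2) * Ef N (2 * k * int l)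
                      * (cnj c * Ef N (- ((int l - int n)\<^sup>2))))"
      by (rule sum.cong) (use n in \<open>auto simp: L1 adj_index[OF Fcar] Fi Ef_cnj\<close>)
    also have "\<dots> = (\<Sum>l\<in>{0..<N}. (c * cnj c * Ef N ((int m)\<^sup>2 - (int n)\<^sup>2)) * Ef N (2 * (k + int n - int m) * int l))"
    proof (rule sum.cong)
      fix l assume "l \<in> {0..<N}"
      have eq: "(int l - int m)\<^sup>2 + 2 * k * int l + - ((int l - int n)\<^sup>2)
          = ((int m)\<^sup>2 - (int n)\<^sup>2) + 2 * (k + int n - int m) * int l"
        by (simp add: power2_eq_square algebra_simps)
      have "Ef N ((int l - int m)\<^sup>2) * Ef N (2 * k * int l) * Ef N (- ((int l - int n)\<^sup>2))
          = Ef N ((int m)\<^sup>2 - (int n)\<^sup>2) * Ef N (2 * (k + int n - int m) * int l)"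
        by (simp only: Ef_add[symmetric] eq)
      thus "c * Ef N ((int l - int m)\<^sup>2) * Ef N (2 * k * int l) * (cnj c * Ef N (- ((int l - int n)\<^sup>2)))
          = (c * cnj c * Ef N ((int m)\<^sup>2 - (int n)\<^sup>2)) * Ef N (2 * (k + int n - int m) * int l)"
        by (simp add: mult_ac)
    qed simp
    also have "\<dots> = (c * cnj c * Ef N ((int m)\<^sup>2 - (int n)\<^sup>2)) * (\<Sum>l<N. Ef N (2 * (k + int n - int m) * int l))"
      by (simp add: sum_distrib_left atLeast0LessThan)
    also have "\<dots> = (if int N dvd (k + int n - int m) then Ef N ((int m)\<^sup>2 - (int n)\<^sup>2) else 0)"
      by (subst Ef_geo[OF N0]) (simp add: cc N0)
    finally have LHS: "(fresnel_mat N * Dk N k * mat_adjoint (fresnel_mat N)) $$ (m, n) =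
        (if int N dvd (k + int n - int m) then Ef N ((int m)\<^sup>2 - (int n)\<^sup>2) else 0)" .
    have "(Pk N k * Dk N k) $$ (m, n) = (\<Sum>i\<in>{0..<N}. Pk N k $$ (m, i) * Dk N k $$ (i, n))"
      using m n by (simp add: scalar_prod_def Dk_def Pk_def)
    also have "\<dots> = (\<Sum>i\<in>{0..<N}. if i = n then Pk N k $$ (m, n) * Ef N (2 * k * int n) else 0)"
      by (rule sum.cong) (use m n in \<open>auto simp: Dk_def\<close>)
    also have "\<dots> = Pk N k $$ (m, n) * Ef N (2 * k * int n)" using n by simp
    finally have R: "(Pk N k * Dk N k) $$ (m, n) = Pk N k $$ (m, n) * Ef N (2 * k * int n)" .
    have cond: "(int m mod int N = (int n + k) mod int N) = (int N dvd (k + int n - int m))"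
      by (simp add: mod_eq_dvd_iff dvd_diff_commute add.commute)
    show "(fresnel_mat N * Dk N k * mat_adjoint (fresnel_mat N)) $$ (m, n) =
        (Ef N (k\<^sup>2) \<cdot>\<^sub>m (Pk N k * Dk N k)) $$ (m, n)"
    proof (cases "int N dvd (k + int n - int m)")
      case True
      then obtain s where s: "k + int n - int m = int N * s" by blast
      have "(int m)\<^sup>2 - (int n)\<^sup>2 = (k\<^sup>2 + 2 * k * int n) + 2 * int N * (- s * k + int h * s\<^sup>2 - int n * s)"
      proof -
        have mm: "int m = k + int n - int N * s" using s by simp
        show ?thesis unfolding mm h by (simp add: power2_eq_square algebra_simps)
      qed
      hence "Ef N ((int m)\<^sup>2 - (int n)\<^sup>2) = Ef N (k\<^sup>2 + 2 * k * int n)"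
        by (rule Ef_cong[OF N0])
      then show ?thesis using True m n LHS R cond
        by (simp add: Pk_def Dk_def Ef_add)
    next
      case False
      then show ?thesis using m n LHS R cond
        by (simp add: Pk_def Dk_def)
    qed
  qed (use adj_car[OF Fcar] Fcar in \<open>auto simp: Pk_def Dk_def\<close>)
qed

end
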